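(* In the three-door Monty Hall game described in the context, let $Q$ be a fully supported mixed strategy of Monte, and let $\pi_\theta=Q(\{(\theta,d):d\neq\theta\})$ for $\theta\in\{1,2,3\}$. Then every pure Bayesian strategy for $Q$ is always-switching, so every Bayesian strategy for $Q$ is a mixture of always-switching strategies. Moreover, if (after relabeling the doors) $\pi_1\ge\pi_2\ge\pi_3>0$, the pure Bayesian strategies are exactly: (1) $3\,\mathrm{s}\,\mathrm{s}$ alone if $\pi_1\ge\pi_2>\pi_3$; (2) $2\,\mathrm{s}\,\mathrm{s}$ and $3\,\mathrm{s}\,\mathrm{s}$ if $\pi_1>\pi_2=\pi_3$; (3) $1\,\mathrm{s}\,\mathrm{s}$, $2\,\mathrm{s}\,\mathrm{s}$ and $3\,\mathrm{s}\,\mathrm{s}$ if $\pi_1=\pi_2=\pi_3=1/3$.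
   Context: Doors are numbered $1,2,3$. A pure strategy of Monte is a pair $(\theta,d)$ with $\theta\in\{1,2,3\}$ (the door hiding the prize) and $d\in\{1,2,3\}\setminus\{\theta\}$ (six strategies). A pure strategy of Conie is a triple $x\,a\,b$ with $x\in\{1,2,3\}$ and $a,b\in\{\mathrm{h},\mathrm{s}\}$ (twelve strategies). Under the profile $((\theta,d),x\,a\,b)$: Monte offers door $y=\theta$ if $x\neq\theta$ and $y=d$ if $x=\theta$; Conie's action is $a$ if $y$ is the smaller of the two doors in $\{1,2,3\}\setminus\{x\}$ and $b$ otherwise; her final choice is $z=x$ for action $\mathrm{h}$ and $z=y$ for action $\mathrm{s}$; she wins (payoff 1) iff $z=\theta$, else payoff 0. Strategies $x\,\mathrm{s}\,\mathrm{s}$ are always-switching. A mixed strategy is a probability distribution on pure strategies; it is fully supported if every pure strategy has positive probability. For a mixed strategy $Q$ of Monte, a (mixed) strategy $P$ of Conie is Bayesian if it maximizes Conie's winning probability $\sum_{A,S}P(A)Q(S)C(A,S)$ over all mixed strategies of Conie (with $P$, $Q$ independent); a pure Bayesian strategy is a pure strategy with this property. *)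

theory Defs
  imports Complex_Main
begin

definition doors :: "nat set" where "doors = {1,2,3}"

datatype act = Hold | Switch

type_synonym monte_strat = "nat \<times> nat"
type_synonym conie_strat = "nat \<times> act \<times> act"

definition monte_strats :: "monte_strat set" where
  "monte_strats = {(\<theta>, d). \<theta> \<in> doors \<and> d \<in> doors - {\<theta>}}"

definition conie_strats :: "conie_strat set" where
  "conie_strats = {(x, a, b). x \<in> doors}"

definition offered :: "monte_strat \<Rightarrow> nat \<Rightarrow> nat" where
  "offered S x = (if x \<noteq> fst S then fst S else snd S)"

definition conie_action :: "conie_strat \<Rightarrow> nat \<Rightarrow> act" where
  "conie_action A y = (case A of (x, a, b) \<Rightarrow>
      if y = Min (doors - {x}) then a else b)"

definition final_choice :: "conie_strat \<Rightarrow> monte_strat \<Rightarrow> nat" where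
  "final_choice A S = (let x = fst A; y = offered S x in
      if conie_action A y = Hold then x else y)"

definition payoff :: "conie_strat \<Rightarrow> monte_strat \<Rightarrow> real" where
  "payoff A S = (if final_choice A S = fst S then 1 else 0)"

definition mixed :: "'s set \<Rightarrow> ('s \<Rightarrow> real) \<Rightarrow> bool" where
  "mixed M P \<longleftrightarrow> (\<forall>s. 0 \<le> P s) \<and> (\<forall>s. s \<notin> M \<longrightarrow> P s = 0) \<and> sum P M = 1"

definition fully_supported :: "'s set \<Rightarrow> ('s \<Rightarrow> real) \<Rightarrow> bool" where
  "fully_supported M P \<longleftrightarrow> mixed M P \<and> (\<forall>s\<in>M. 0 < P s)"

definition win_prob :: "(conie_strat \<Rightarrow> real) \<Rightarrow> (monte_strat \<Rightarrow> real) \<Rightarrow> real" where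
  "win_prob P Q = (\<Sum>A\<in>conie_strats. \<Sum>S\<in>monte_strats. P A * Q S * payoff A S)"

definition bayesian :: "(monte_strat \<Rightarrow> real) \<Rightarrow> (conie_strat \<Rightarrow> real) \<Rightarrow> bool" where
  "bayesian Q P \<longleftrightarrow> mixed conie_strats P \<and>
     (\<forall>P'. mixed conie_strats P' \<longrightarrow> win_prob P' Q \<le> win_prob P Q)"

definition pure :: "conie_strat \<Rightarrow> conie_strat \<Rightarrow> real" where
  "pure A = (\<lambda>B. if B = A then 1 else 0)"

definition pure_bayesian :: "(monte_strat \<Rightarrow> real) \<Rightarrow> conie_strat \<Rightarrow> bool" where
  "pure_bayesian Q A \<longleftrightarrow> A \<in> conie_strats \<and> bayesian Q (pure A)"

definition always_switching :: "conie_strat \<Rightarrow> bool" where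
  "always_switching A \<longleftrightarrow> fst (snd A) = Switch \<and> snd (snd A) = Switch"

definition prize_prob :: "(monte_strat \<Rightarrow> real) \<Rightarrow> nat \<Rightarrow> real" where
  "prize_prob Q \<theta> = (\<Sum>d\<in>doors - {\<theta>}. Q (\<theta>, d))"

end

theory Submission imports Defs begin

lemma doors_eq: "doors = {1,2,3}" by (simp add: doors_def)

lemma monte_eq: "monte_strats = {(1,2),(1,3),(2,1),(2,3),(3,1),(3,2)}"
  by (auto simp: monte_strats_def doors_def)

lemma act_UNIV: "(UNIV::act set) = {Hold, Switch}"
proof -
  have "a \<in> {Hold, Switch}" for a by (cases a) auto
  then show ?thesis by blast
qed

lemma conie_eq: "conie_strats = {1,2,3} \<times> {Hold,Switch} \<times> {Hold,Switch}"
proof -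
  have "conie_strats = doors \<times> UNIV \<times> UNIV" by (auto simp: conie_strats_def)
  then show ?thesis by (simp add: act_UNIV doors_def)
qed

lemma fin_cs: "finite conie_strats" by (simp add: conie_eq)

definition W where "W Q A = (\<Sum>S\<in>monte_strats. Q S * payoff A S)"

lemma win_prob_eq: "win_prob P Q = (\<Sum>A\<in>conie_strats. P A * W Q A)"
  unfolding win_prob_def W_def by (simp add: sum_distrib_left mult.assoc)

lemma win_pure: "A \<in> conie_strats \<Longrightarrow> win_prob (pure A) Q = W Q A"
proof -
  assume "A \<in> conie_strats"
  have "win_prob (pure A) Q = (\<Sum>B\<in>conie_strats. if B = A then W Q B else 0)"
    unfolding win_prob_eq pure_def by (rule sum.cong) auto
  also have "\<dots> = W Q A" using \<open>A \<in> conie_strats\<close> by (simp add: fin_cs)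
  finally show ?thesis .
qed

lemma mins: "Min (doors - {1}) = 2" "Min (doors - {2}) = 1" "Min (doors - {3}) = 1" "Min (doors - {Suc 0}) = 2"
  by (simp_all add: doors_def insert_Diff_if)

lemma W_expand: "W Q A = Q(1,2)*payoff A (1,2) + Q(1,3)*payoff A (1,3) + Q(2,1)*payoff A (2,1)
   + Q(2,3)*payoff A (2,3) + Q(3,1)*payoff A (3,1) + Q(3,2)*payoff A (3,2)"
  by (simp add: W_def monte_eq)

lemma Wv:
  "W Q (1,Hold,Hold) = Q(1,2) + Q(1,3)"
  "W Q (1,Hold,Switch) = Q(1,2) + Q(3,1)+Q(3,2)"
  "W Q (1,Switch,Hold) = Q(2,1)+Q(2,3) + Q(1,3)"
  "W Q (1,Switch,Switch) = Q(2,1)+Q(2,3) + Q(3,1)+Q(3,2)"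
  "W Q (2,Hold,Hold) = Q(2,1) + Q(2,3)"
  "W Q (2,Hold,Switch) = Q(2,1) + Q(3,1)+Q(3,2)"
  "W Q (2,Switch,Hold) = Q(1,2)+Q(1,3) + Q(2,3)"
  "W Q (2,Switch,Switch) = Q(1,2)+Q(1,3) + Q(3,1)+Q(3,2)"
  "W Q (3,Hold,Hold) = Q(3,1) + Q(3,2)"
  "W Q (3,Hold,Switch) = Q(3,1) + Q(2,1)+Q(2,3)"
  "W Q (3,Switch,Hold) = Q(1,2)+Q(1,3) + Q(3,2)"
  "W Q (3,Switch,Switch) = Q(1,2)+Q(1,3) + Q(2,1)+Q(2,3)"
  by (simp_all add: W_expand payoff_def final_choice_def offered_def conie_action_def mins)

lemma mixed_pure: "A \<in> conie_strats \<Longrightarrow> mixed conie_strats (pure A)"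
  unfolding mixed_def pure_def by (auto simp: fin_cs)

lemma pb_iff: "pure_bayesian Q A \<longleftrightarrow> A \<in> conie_strats \<and> (\<forall>B\<in>conie_strats. W Q B \<le> W Q A)"
proof
  assume h: "pure_bayesian Q A"
  then have A: "A \<in> conie_strats" and b: "bayesian Q (pure A)" by (auto simp: pure_bayesian_def)
  show "A \<in> conie_strats \<and> (\<forall>B\<in>conie_strats. W Q B \<le> W Q A)"
  proof (intro conjI ballI A)
    fix B assume B: "B \<in> conie_strats"
    have "win_prob (pure B) Q \<le> win_prob (pure A) Q" using b mixed_pure[OF B] by (auto simp: bayesian_def)
    then show "W Q B \<le> W Q A" using A B by (simp add: win_pure)
  qed
next
  assume h: "A \<in> conie_strats \<and> (\<forall>B\<in>conie_strats. W Q B \<le> W Q A)"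
  show "pure_bayesian Q A" unfolding pure_bayesian_def bayesian_def
  proof (intro conjI allI impI)
    show "A \<in> conie_strats" "mixed conie_strats (pure A)" using h mixed_pure by auto
    fix P' assume m: "mixed conie_strats P'"
    have "win_prob P' Q = (\<Sum>B\<in>conie_strats. P' B * W Q B)" by (rule win_prob_eq)
    also have "\<dots> \<le> (\<Sum>B\<in>conie_strats. P' B * W Q A)"
      by (rule sum_mono) (use h m in \<open>auto simp: mixed_def intro: mult_left_mono\<close>)
    also have "\<dots> = W Q A" using m by (simp add: mixed_def sum_distrib_right[symmetric])
    also have "\<dots> = win_prob (pure A) Q" using h by (simp add: win_pure)
    finally show "win_prob P' Q \<le> win_prob (pure A) Q" .
  qed
qed

lemma support_pb:
  assumes b: "bayesian Q P" and A: "A \<in> conie_strats" and pos: "0 < P A"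
  shows "pure_bayesian Q A"
proof -
  have ne: "W Q ` conie_strats \<noteq> {}" using A by blast
  have fi: "finite (W Q ` conie_strats)" using fin_cs by blast
  define M where "M = Max (W Q ` conie_strats)"
  have "M \<in> W Q ` conie_strats" unfolding M_def using ne fi by (rule Max_in[rotated])
  then obtain A0 where A0: "A0 \<in> conie_strats" "W Q A0 = M" by blast
  have le: "W Q B \<le> M" if "B \<in> conie_strats" for B
    unfolding M_def using fi imageI[OF that, of "W Q"] by (rule Max_ge)
  have m: "mixed conie_strats P" using b by (simp add: bayesian_def)
  have m1: "\<forall>s. 0 \<le> P s" "sum P conie_strats = 1" using m by (simp_all add: mixed_def)
  have "win_prob (pure A0) Q \<le> win_prob P Q" using b mixed_pure[OF A0(1)] unfolding bayesian_def by blast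
  moreover have "win_prob (pure A0) Q = M" using A0 win_pure[of A0 Q] by simp
  ultimately have ge: "M \<le> (\<Sum>B\<in>conie_strats. P B * W Q B)" using win_prob_eq[of P Q] by linarith
  have "(\<Sum>B\<in>conie_strats. P B * (M - W Q B)) = (\<Sum>B\<in>conie_strats. P B * M - P B * W Q B)"
    by (simp only: right_diff_distrib)
  also have "\<dots> = (\<Sum>B\<in>conie_strats. P B) * M - (\<Sum>B\<in>conie_strats. P B * W Q B)"
    by (simp only: sum_subtractf sum_distrib_right)
  also have "\<dots> = M - (\<Sum>B\<in>conie_strats. P B * W Q B)" using m1 by simp
  finally have s0: "(\<Sum>B\<in>conie_strats. P B * (M - W Q B)) \<le> 0" using ge by linarith
  have nn: "0 \<le> P B * (M - W Q B)" if "B \<in> conie_strats" for B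
    using m1(1)[rule_format, of B] le[OF that] by (intro mult_nonneg_nonneg) simp_all
  have "0 \<le> (\<Sum>B\<in>conie_strats. P B * (M - W Q B))" by (rule sum_nonneg) (rule nn)
  then have "(\<Sum>B\<in>conie_strats. P B * (M - W Q B)) = 0" using s0 by linarith
  then have "\<forall>B\<in>conie_strats. P B * (M - W Q B) = 0"
    using sum_nonneg_eq_0_iff[OF fin_cs, of "\<lambda>B. P B * (M - W Q B)"] nn by simp
  then have "P A * (M - W Q A) = 0" using A by simp
  then have WA: "W Q A = M" using pos by simp
  show ?thesis unfolding pb_iff using A le WA by simp
qed

lemma in_cs: "(x,a,b) \<in> conie_strats \<longleftrightarrow> x \<in> {1,2,3}"
  by (simp add: conie_strats_def doors_def)

lemma cs12: "conie_strats = {(1,Hold,Hold),(1,Hold,Switch),(1,Switch,Hold),(1,Switch,Switch),(2,Hold,Hold),(2,Hold,Switch),(2,Switch,Hold),(2,Switch,Switch),(3,Hold,Hold),(3,Hold,Switch),(3,Switch,Hold),(3,Switch,Switch)}"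
proof (rule set_eqI)
  fix A :: "nat \<times> act \<times> act"
  obtain x a b where A: "A = (x,a,b)" by (cases A) auto
  show "A \<in> conie_strats \<longleftrightarrow> A \<in> {(1,Hold,Hold),(1,Hold,Switch),(1,Switch,Hold),(1,Switch,Switch),(2,Hold,Hold),(2,Hold,Switch),(2,Switch,Hold),(2,Switch,Switch),(3,Hold,Hold),(3,Hold,Switch),(3,Switch,Hold),(3,Switch,Switch)}"
    unfolding A in_cs by (cases a; cases b) simp_all
qed

lemma pb_iff3: "pure_bayesian Q A \<longleftrightarrow> A \<in> conie_strats \<and> W Q (1,Hold,Hold) \<le> W Q A \<and> W Q (1,Hold,Switch) \<le> W Q A \<and> W Q (1,Switch,Hold) \<le> W Q A \<and> W Q (1,Switch,Switch) \<le> W Q A \<and> W Q (2,Hold,Hold) \<le> W Q A \<and> W Q (2,Hold,Switch) \<le> W Q A \<and> W Q (2,Switch,Hold) \<le> W Q A \<and> W Q (2,Switch,Switch) \<le> W Q A \<and> W Q (3,Hold,Hold) \<le> W Q A \<and> W Q (3,Hold,Switch) \<le> W Q A \<and> W Q (3,Switch,Hold) \<le> W Q A \<and> W Q (3,Switch,Switch) \<le> W Q A"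
  unfolding pb_iff cs12 ball_simps simp_thms by (rule TrueI)


lemma split_strat:
  fixes P :: "nat \<times> act \<times> act \<Rightarrow> bool"
  assumes "\<And>x a b. x \<notin> {1,2,3} \<Longrightarrow> P (x,a,b)"
  "P (1,Hold,Hold)"
  "P (1,Hold,Switch)"
  "P (1,Switch,Hold)"
  "P (1,Switch,Switch)"
  "P (2,Hold,Hold)"
  "P (2,Hold,Switch)"
  "P (2,Switch,Hold)"
  "P (2,Switch,Switch)"
  "P (3,Hold,Hold)"
  "P (3,Hold,Switch)"
  "P (3,Switch,Hold)"
  "P (3,Switch,Switch)"
  shows "P A"
proof -
  obtain x a b where A: "A = (x,a,b)" by (cases A) auto
  show ?thesis
  proof (cases "x \<in> {1,2,3}")
    case False then show ?thesis using assms(1) A by blast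
  next
    case True
    then have "x = 1 \<or> x = 2 \<or> x = 3" by blast
    then show ?thesis using A assms(2-) by (elim disjE; cases a; cases b) simp_all
  qed
qed

lemma nsw:
  assumes "Q(1,2) > 0" "Q(1,3) > 0" "Q(2,1) > 0" "Q(2,3) > 0" "Q(3,1) > 0" "Q(3,2) > 0"
  shows   "W Q (1,Hold,Hold) < W Q (2,Switch,Switch)"
  "W Q (1,Hold,Switch) < W Q (2,Switch,Switch)"
  "W Q (1,Switch,Hold) < W Q (3,Switch,Switch)"
  "W Q (2,Hold,Hold) < W Q (1,Switch,Switch)"
  "W Q (2,Hold,Switch) < W Q (1,Switch,Switch)"
  "W Q (2,Switch,Hold) < W Q (3,Switch,Switch)"
  "W Q (3,Hold,Hold) < W Q (1,Switch,Switch)"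
  "W Q (3,Hold,Switch) < W Q (1,Switch,Switch)"
  "W Q (3,Switch,Hold) < W Q (2,Switch,Switch)"
  unfolding Wv using assms by linarith+

lemma dominated:
  assumes "Q(1,2) > 0" "Q(1,3) > 0" "Q(2,1) > 0" "Q(2,3) > 0" "Q(3,1) > 0" "Q(3,2) > 0"
  shows "\<forall>B\<in>conie_strats. \<exists>y\<in>{1,2,3}. W Q B \<le> W Q (y,Switch,Switch)"
  unfolding cs12 ball_simps simp_thms
  apply (intro conjI)
  apply (rule bexI[where x="2::nat"], insert nsw[OF assms], linarith, simp)
  apply (rule bexI[where x="2::nat"], insert nsw[OF assms], linarith, simp)
  apply (rule bexI[where x="3::nat"], insert nsw[OF assms], linarith, simp)
  apply (rule bexI[where x="1::nat"], insert nsw[OF assms], linarith, simp)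
  apply (rule bexI[where x="1::nat"], insert nsw[OF assms], linarith, simp)
  apply (rule bexI[where x="1::nat"], insert nsw[OF assms], linarith, simp)
  apply (rule bexI[where x="3::nat"], insert nsw[OF assms], linarith, simp)
  apply (rule bexI[where x="2::nat"], insert nsw[OF assms], linarith, simp)
  apply (rule bexI[where x="1::nat"], insert nsw[OF assms], linarith, simp)
  apply (rule bexI[where x="1::nat"], insert nsw[OF assms], linarith, simp)
  apply (rule bexI[where x="2::nat"], insert nsw[OF assms], linarith, simp)
  apply (rule bexI[where x="3::nat"], insert nsw[OF assms], linarith, simp)
  done

lemma pp: "prize_prob Q 1 = Q(1,2)+Q(1,3)" "prize_prob Q 2 = Q(2,1)+Q(2,3)" "prize_prob Q 3 = Q(3,1)+Q(3,2)"
  by (simp_all add: prize_prob_def doors_def insert_Diff_if)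

lemma Wss: "x \<in> {1,2,3} \<Longrightarrow> W Q (x,Switch,Switch) = (Q(1,2)+Q(1,3)+Q(2,1)+Q(2,3)+Q(3,1)+Q(3,2)) - prize_prob Q x"
proof -
  assume "x \<in> {1,2,3}"
  then have "x = 1 \<or> x = 2 \<or> x = 3" by blast
  then show ?thesis by (elim disjE) (simp_all only: Wv pp; linarith)+
qed

lemma part1:
  assumes "Q(1,2) > 0" "Q(1,3) > 0" "Q(2,1) > 0" "Q(2,3) > 0" "Q(3,1) > 0" "Q(3,2) > 0"
  shows "pure_bayesian Q A \<Longrightarrow> always_switching A"
  apply (rule split_strat[of "\<lambda>A. pure_bayesian Q A \<longrightarrow> always_switching A", rule_format])
  apply (simp add: pb_iff3 in_cs)
  using nsw[OF assms] apply (simp_all only: pb_iff3 always_switching_def fst_conv snd_conv simp_thms act.distinct)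
  apply linarith+
  done

lemma pb_char:
  assumes "Q(1,2) > 0" "Q(1,3) > 0" "Q(2,1) > 0" "Q(2,3) > 0" "Q(3,1) > 0" "Q(3,2) > 0"
  shows "pure_bayesian Q A \<longleftrightarrow> (\<exists>x\<in>{1,2,3}. A = (x,Switch,Switch) \<and> (\<forall>y\<in>{1,2,3}. prize_prob Q x \<le> prize_prob Q y))"
proof
  assume h: "pure_bayesian Q A"
  obtain x a b where A: "A = (x,a,b)" by (cases A) auto
  have sw: "a = Switch" "b = Switch" using part1[OF assms h] A by (simp_all add: always_switching_def)
  have x: "x \<in> {1,2,3}" using h A by (simp add: pb_iff in_cs)
  have "prize_prob Q x \<le> prize_prob Q y" if y: "y \<in> {1,2,3}" for y
  proof -
    have "(y,Switch,Switch) \<in> conie_strats" using y by (simp add: in_cs)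
    then have "W Q (y,Switch,Switch) \<le> W Q A" using h by (simp add: pb_iff)
    then show ?thesis using Wss[OF x, of Q] Wss[OF y, of Q] A sw by simp
  qed
  then show "\<exists>x\<in>{1,2,3}. A = (x,Switch,Switch) \<and> (\<forall>y\<in>{1,2,3}. prize_prob Q x \<le> prize_prob Q y)"
    using x A sw by blast
next
  assume "\<exists>x\<in>{1,2,3}. A = (x,Switch,Switch) \<and> (\<forall>y\<in>{1,2,3}. prize_prob Q x \<le> prize_prob Q y)"
  then obtain x where x: "x \<in> {1,2,3}" "A = (x,Switch,Switch)" and mn: "\<forall>y\<in>{1,2,3}. prize_prob Q x \<le> prize_prob Q y"
    by blast
  have "W Q B \<le> W Q A" if B: "B \<in> conie_strats" for B
  proof -
    obtain y where y: "y \<in> {1,2,3}" "W Q B \<le> W Q (y,Switch,Switch)" using dominated[OF assms] B by blast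
    have "prize_prob Q x \<le> prize_prob Q y" using mn y(1) by blast
    then have "W Q (y,Switch,Switch) \<le> W Q A" unfolding x(2) Wss[OF x(1), of Q] Wss[OF y(1), of Q] by linarith
    then show ?thesis using y(2) by linarith
  qed
  moreover have "A \<in> conie_strats" using x by (simp add: in_cs)
  ultimately show "pure_bayesian Q A" by (simp add: pb_iff)
qed

lemma pb_set:
  assumes "Q(1,2) > 0" "Q(1,3) > 0" "Q(2,1) > 0" "Q(2,3) > 0" "Q(3,1) > 0" "Q(3,2) > 0" and ijk: "{i,j,k} = doors"
  shows "{A. pure_bayesian Q A} = {(x,Switch,Switch) | x. x \<in> {i,j,k} \<and> prize_prob Q x \<le> prize_prob Q i
     \<and> prize_prob Q x \<le> prize_prob Q j \<and> prize_prob Q x \<le> prize_prob Q k}"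
proof -
  have d: "{1,2,3} = {i,j,k}" using ijk by (simp add: doors_def)
  show ?thesis unfolding pb_char[OF assms(1-6)] d by auto
qed

theorem mainTheorem3:
  fixes Q :: "monte_strat \<Rightarrow> real"
  assumes "fully_supported monte_strats Q"
  shows "(\<forall>A. pure_bayesian Q A \<longrightarrow> always_switching A)
   \<and> (\<forall>P. bayesian Q P \<longrightarrow> (\<forall>A\<in>conie_strats. 0 < P A \<longrightarrow> always_switching A))
   \<and> (\<forall>i j k. {i, j, k} = doors \<and> distinct [i, j, k] \<and>
         prize_prob Q i \<ge> prize_prob Q j \<and> prize_prob Q j \<ge> prize_prob Q k \<longrightarrow>
       (prize_prob Q j > prize_prob Q k \<longrightarrow>
          {A. pure_bayesian Q A} = {(k, Switch, Switch)})
     \<and> (prize_prob Q i > prize_prob Q j \<and> prize_prob Q j = prize_prob Q k \<longrightarrow>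
          {A. pure_bayesian Q A} = {(j, Switch, Switch), (k, Switch, Switch)})
     \<and> (prize_prob Q i = prize_prob Q j \<and> prize_prob Q j = prize_prob Q k \<longrightarrow>
          prize_prob Q i = 1/3 \<and>
          {A. pure_bayesian Q A} = {(1, Switch, Switch), (2, Switch, Switch), (3, Switch, Switch)}))"
proof -
  have fs: "\<forall>s\<in>monte_strats. 0 < Q s" "sum Q monte_strats = 1"
    using assms by (auto simp: fully_supported_def mixed_def)
  have p: "Q(1,2) > 0" "Q(1,3) > 0" "Q(2,1) > 0" "Q(2,3) > 0" "Q(3,1) > 0" "Q(3,2) > 0" using fs(1) by (simp_all add: monte_eq)
  have s1: "Q(1,2)+Q(1,3)+Q(2,1)+Q(2,3)+Q(3,1)+Q(3,2) = 1" using fs(2) by (simp add: monte_eq)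
  have P1: "\<forall>A. pure_bayesian Q A \<longrightarrow> always_switching A"
    using part1[OF p] by blast
  have P2: "\<forall>P. bayesian Q P \<longrightarrow> (\<forall>A\<in>conie_strats. 0 < P A \<longrightarrow> always_switching A)"
    using P1 support_pb by blast
  show ?thesis
  proof (intro conjI P1 P2 allI impI)
    fix i j k :: nat
    assume h: "{i, j, k} = doors \<and> distinct [i, j, k] \<and>
         prize_prob Q i \<ge> prize_prob Q j \<and> prize_prob Q j \<ge> prize_prob Q k"
    have S: "{A. pure_bayesian Q A} = {(x,Switch,Switch) | x. x \<in> {i,j,k} \<and> prize_prob Q x \<le> prize_prob Q i
     \<and> prize_prob Q x \<le> prize_prob Q j \<and> prize_prob Q x \<le> prize_prob Q k}"
      using pb_set[OF p] h by blast
    have h2: "distinct [i, j, k] \<and> prize_prob Q i \<ge> prize_prob Q j \<and> prize_prob Q j \<ge> prize_prob Q k" using h by blast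
    show "prize_prob Q j > prize_prob Q k \<Longrightarrow> {A. pure_bayesian Q A} = {(k, Switch, Switch)}"
      unfolding S using h2 by auto
    show "prize_prob Q i > prize_prob Q j \<and> prize_prob Q j = prize_prob Q k \<Longrightarrow>
          {A. pure_bayesian Q A} = {(j, Switch, Switch), (k, Switch, Switch)}"
      unfolding S using h2 by auto
    assume e: "prize_prob Q i = prize_prob Q j \<and> prize_prob Q j = prize_prob Q k"
    have d: "{1,2,3} = {i,j,k}" using h by (simp add: doors_def)
    have all: "prize_prob Q y = prize_prob Q i" if "y \<in> {1,2,3}" for y
      using that e unfolding d by auto
    have "prize_prob Q 1 + prize_prob Q 2 + prize_prob Q 3 = 1" unfolding pp using s1 by linarith
    then show "prize_prob Q i = 1/3" using all[of 1] all[of 2] all[of 3] by simp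
    show "{A. pure_bayesian Q A} = {(1, Switch, Switch), (2, Switch, Switch), (3, Switch, Switch)}"
    proof -
      have "{A. pure_bayesian Q A} = (\<lambda>x. (x,Switch,Switch)) ` {i,j,k}" unfolding S using e by auto
      then show ?thesis unfolding d[symmetric] by simp
    qed
  qed
qed
end
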